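(* Let $q=2^r$ with $r\ge 3$. Let $f\in\mathbb F_q[X,Y]$ be a local permutation polynomial whose permutation polynomial tuple consists of the $q$ elements of the group $G_2=\{b^ja^i:0\le j\le \frac q2-1,\ 0\le i\le 1\}$ (in some order), where $a$ and $b$ are as defined below. Then $f$ has a companion.
   Context: The elements of $\mathbb F_q$ are enumerated as $\mathbb F_q=\{c_0,\dots,c_{q-1}\}$; $\mathfrak S_q$ is the symmetric group of permutations of $\mathbb F_q$, composed right to left, written in cycle notation. $a=(c_0,c_1)(c_2,c_3)\cdots(c_{q-2},c_{q-1})$ and $b=(c_{\frac q2-2},c_{\frac q2-4},\dots,c_2,c_0,c_{\frac q2},c_{\frac q2+2},\dots,c_{q-4},c_{q-2})\,(c_1,c_3,\dots,c_{\frac q2-1},c_{q-1},c_{q-3},\dots,c_{\frac q2+1})$. ($G_2$ is a subgroup of $\mathfrak S_q$ of order $q$ whose non-identity elements have no fixed points.) Every function $\mathbb F_q^2\to\mathbb F_q$ is identified with the unique polynomial in $\mathbb F_q[X,Y]$ of degree $<q$ in each variable representing it. $f$ is a local permutation polynomial (LPP) if $x\mapsto f(x,y_0)$ and $y\mapsto f(x_0,y)$ are permutations of $\mathbb F_q$ for all $x_0,y_0$. A permutation polynomial tuple is $(\beta_0,\dots,\beta_{q-1})\in\mathfrak S_q^q$ such that $\beta_i^{-1}\beta_j$ has no fixed point whenever $i\ne j$; LPPs $f$ correspond bijectively to such tuples via $f(x,\beta_i(x))=c_i$ for all $x$ and all $i$. Two LPPs $f,g$ are orthogonal (companions) if for every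 $(u,v)\in\mathbb F_q^2$ the system $f(X,Y)=u$, $g(X,Y)=v$ has exactly one solution in $\mathbb F_q^2$; a companion of $f$ is an LPP orthogonal to $f$. *)

theory Defs
  imports "HOL-Combinatorics.Cycles" "HOL-Library.Cardinality"
begin

text \<open>Functions F x F -> F (identified with reduced bivariate polynomials) are
  represented as curried functions.  Permutations of F are bijections F -> F.\<close>

definition lpp :: "('a \<Rightarrow> 'a \<Rightarrow> 'a) \<Rightarrow> bool" where
  "lpp f \<longleftrightarrow> (\<forall>y. bij (\<lambda>x. f x y)) \<and> (\<forall>x. bij (\<lambda>y. f x y))"

definition orthogonal :: "('a \<Rightarrow> 'a \<Rightarrow> 'a) \<Rightarrow> ('a \<Rightarrow> 'a \<Rightarrow> 'a) \<Rightarrow> bool" where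
  "orthogonal f g \<longleftrightarrow> (\<forall>u v. \<exists>!p. f (fst p) (snd p) = u \<and> g (fst p) (snd p) = v)"

definition companion :: "('a \<Rightarrow> 'a \<Rightarrow> 'a) \<Rightarrow> ('a \<Rightarrow> 'a \<Rightarrow> 'a) \<Rightarrow> bool" where
  "companion f g \<longleftrightarrow> lpp g \<and> orthogonal f g"

definition ppt :: "nat \<Rightarrow> (nat \<Rightarrow> 'a \<Rightarrow> 'a) \<Rightarrow> bool" where
  "ppt q \<beta> \<longleftrightarrow> (\<forall>i<q. bij (\<beta> i)) \<and>
     (\<forall>i<q. \<forall>j<q. i \<noteq> j \<longrightarrow> (\<forall>x. inv (\<beta> i) (\<beta> j x) \<noteq> x))"

definition ppt_of :: "nat \<Rightarrow> (nat \<Rightarrow> 'a) \<Rightarrow> ('a \<Rightarrow> 'a \<Rightarrow> 'a) \<Rightarrow> (nat \<Rightarrow> 'a \<Rightarrow> 'a) \<Rightarrow> bool" where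
  "ppt_of q c f \<beta> \<longleftrightarrow> ppt q \<beta> \<and> (\<forall>i<q. \<forall>x. f x (\<beta> i x) = c i)"

text \<open>a = (c_0,c_1)(c_2,c_3)...(c_{q-2},c_{q-1})\<close>
definition perm_a :: "nat \<Rightarrow> (nat \<Rightarrow> 'a) \<Rightarrow> 'a \<Rightarrow> 'a" where
  "perm_a q c = foldr (\<lambda>k h. cycle_of_list [c (2*k), c (2*k+1)] \<circ> h) [0..<q div 2] id"

text \<open>b = (c_{q/2-2}, c_{q/2-4}, ..., c_2, c_0, c_{q/2}, c_{q/2+2}, ..., c_{q-2})
         (c_1, c_3, ..., c_{q/2-1}, c_{q-1}, c_{q-3}, ..., c_{q/2+1})\<close>
definition b_cycle1 :: "nat \<Rightarrow> (nat \<Rightarrow> 'a) \<Rightarrow> 'a list" where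
  "b_cycle1 q c = rev (map (\<lambda>k. c (2*k)) [0..<q div 4]) @ map (\<lambda>k. c (q div 2 + 2*k)) [0..<q div 4]"

definition b_cycle2 :: "nat \<Rightarrow> (nat \<Rightarrow> 'a) \<Rightarrow> 'a list" where
  "b_cycle2 q c = map (\<lambda>k. c (2*k+1)) [0..<q div 4] @ rev (map (\<lambda>k. c (q div 2 + 2*k + 1)) [0..<q div 4])"

definition perm_b :: "nat \<Rightarrow> (nat \<Rightarrow> 'a) \<Rightarrow> 'a \<Rightarrow> 'a" where
  "perm_b q c = cycle_of_list (b_cycle1 q c) \<circ> cycle_of_list (b_cycle2 q c)"

definition G2 :: "nat \<Rightarrow> (nat \<Rightarrow> 'a) \<Rightarrow> ('a \<Rightarrow> 'a) set" where
  "G2 q c = {(perm_b q c ^^ j) \<circ> (perm_a q c ^^ i) | j i. j < q div 2 \<and> i < 2}"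

end

theory Submission
  imports Defs
begin


lemma dvd_small: fixes N D :: int assumes "N dvd D" "N > 0"
  shows "D = 0 \<or> D \<ge> N \<or> D \<le> - N"
proof -
  obtain k where k: "D = N * k" using assms(1) by blast
  show ?thesis
  proof (cases "k = 0")
    case True then show ?thesis using k by simp
  next
    case False
    then have "k \<ge> 1 \<or> k \<le> -1" by linarith
    then show ?thesis
    proof
      assume "k \<ge> 1" then have "N * k \<ge> N * 1" using assms(2) by (intro mult_left_mono) auto
      then show ?thesis using k by simp
    next
      assume "k \<le> -1" then have "N * k \<le> N * (-1)" using assms(2) by (intro mult_left_mono) auto
      then show ?thesis using k by simp
    qed
  qed
qed

locale dih =
  fixes c :: "nat \<Rightarrow> 'a::finite" and m :: nat
  assumes card: "CARD('a) = 4*m" and meven: "even m" and mpos: "m > 0"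
    and cbij: "bij_betw c {..<4*m} UNIV"
begin

definition ev :: "nat \<Rightarrow> nat" where "ev t = (if t < m then 2*(m-1-t) else 2*m + 2*(t-m))"
definition od :: "nat \<Rightarrow> nat" where "od t = (if t < m then 2*t+1 else 2*m + 2*(2*m-1-t) + 1)"
definition Pos :: "int \<Rightarrow> bool \<Rightarrow> 'a" where
  "Pos t e = c (if e then od (nat (t mod (2*int m))) else ev (nat (t mod (2*int m))))"

lemma cinj: "inj_on c {..<4*m}" using cbij bij_betw_def by blast

lemma ev_lt: "t < 2*m \<Longrightarrow> ev t < 4*m" unfolding ev_def by auto
lemma od_lt: "t < 2*m \<Longrightarrow> od t < 4*m" unfolding od_def by auto
lemma ev_even: "even (ev t)" unfolding ev_def by auto
lemma od_odd: "odd (od t)" unfolding od_def by auto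
lemma ev_inj: "t < 2*m \<Longrightarrow> t' < 2*m \<Longrightarrow> ev t = ev t' \<Longrightarrow> t = t'"
  unfolding ev_def by (auto split: if_splits)
lemma od_inj: "t < 2*m \<Longrightarrow> t' < 2*m \<Longrightarrow> od t = od t' \<Longrightarrow> t = t'"
  unfolding od_def by (auto split: if_splits)
lemma ev_od: "ev t \<noteq> od t'" using ev_even od_odd by metis

lemma nmod_lt: "nat (t mod (2*int m)) < 2*m"
  using mpos by (simp add: nat_less_iff)

lemma Pos_eq: "Pos a e = Pos b d \<longleftrightarrow> e = d \<and> (2*int m) dvd (a - b)"
proof
  assume h: "Pos a e = Pos b d"
  let ?k = "nat (a mod (2*int m))" and ?l = "nat (b mod (2*int m))"
  have k: "?k < 2*m" "?l < 2*m" by (rule nmod_lt)+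
  have idx: "(if e then od ?k else ev ?k) = (if d then od ?l else ev ?l)"
    using h unfolding Pos_def
    by (rule inj_onD[OF cinj]) (use k ev_lt od_lt in auto)
  then have ed: "e = d" using ev_od by (auto split: if_splits) (metis ev_od)+
  then have "?k = ?l" using idx k ev_inj od_inj by (auto split: if_splits)
  moreover have "a mod (2*int m) \<ge> 0" "b mod (2*int m) \<ge> 0" using mpos by simp_all
  ultimately have "a mod (2*int m) = b mod (2*int m)" by (metis nat_eq_iff2)
  then show "e = d \<and> (2*int m) dvd (a - b)" using ed by (simp add: mod_eq_dvd_iff)
next
  assume "e = d \<and> (2*int m) dvd (a - b)"
  then show "Pos a e = Pos b d" unfolding Pos_def by (simp add: mod_eq_dvd_iff[symmetric])
qed

lemma Pos_surj: "\<exists>t e. 0 \<le> t \<and> t < 2*int m \<and> x = Pos t e"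
proof -
  let ?S = "{0..<2*int m} \<times> (UNIV :: bool set)"
  have inj: "inj_on (\<lambda>p. Pos (fst p) (snd p)) ?S"
  proof (rule inj_onI)
    fix p p' assume "p \<in> ?S" "p' \<in> ?S" "Pos (fst p) (snd p) = Pos (fst p') (snd p')"
    then show "p = p'" using Pos_eq dvd_small[of "2*int m" "fst p - fst p'"] mpos
      by (cases p, cases p') auto
  qed
  have "card ((\<lambda>p. Pos (fst p) (snd p)) ` ?S) = card ?S" using card_image[OF inj] .
  also have "\<dots> = 4*m" by (simp add: card_cartesian_product)
  finally have "(\<lambda>p. Pos (fst p) (snd p)) ` ?S = UNIV"
    using card by (metis card_subset_eq finite subset_UNIV)
  then have "x \<in> (\<lambda>p. Pos (fst p) (snd p)) ` ?S" by simp
  then show ?thesis by force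
qed

end


context dih begin

definition TE :: "'a \<Rightarrow> int \<times> bool" where
  "TE x = (SOME p. 0 \<le> fst p \<and> fst p < 2*int m \<and> x = Pos (fst p) (snd p))"
definition T where "T x = fst (TE x)"
definition E where "E x = snd (TE x)"

lemma TE_prop: "0 \<le> T x \<and> T x < 2*int m \<and> x = Pos (T x) (E x)"
proof -
  obtain t e where "0 \<le> t \<and> t < 2*int m \<and> x = Pos t e" using Pos_surj by blast
  then have "\<exists>p. 0 \<le> fst p \<and> fst p < 2*int m \<and> x = Pos (fst p) (snd p)" by (intro exI[of _ "(t,e)"]) auto
  then show ?thesis unfolding T_def E_def TE_def by (rule someI_ex)
qed

lemma T_ge: "0 \<le> T x" and T_lt: "T x < 2*int m" and Pos_TE: "Pos (T x) (E x) = x"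
  using TE_prop by auto

lemma TE_Pos: "E (Pos a e) = e \<and> (2*int m) dvd (T (Pos a e) - a)"
  using Pos_TE[of "Pos a e"] Pos_eq by blast

definition Gam :: "int \<Rightarrow> bool \<Rightarrow> int \<times> bool" where
  "Gam t e = (if t < int m then (if e then (2*t + int m, True) else (2*t, False))
      else (if e then (int m - 1 - 2*(t - int m), False) else (-1 - 2*(t - int m), True)))"

definition gg :: "'a \<Rightarrow> 'a \<Rightarrow> 'a" where
  "gg x y = (if E y = snd (Gam (T x) (E x)) then Pos (T y - fst (Gam (T x) (E x))) False
             else Pos (T y + fst (Gam (T x) (E x))) True)"

lemma gg_Pos: "gg x (Pos a d) = (if d = snd (Gam (T x) (E x)) then Pos (a - fst (Gam (T x) (E x))) False
             else Pos (a + fst (Gam (T x) (E x))) True)"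
proof -
  have "(2*int m) dvd (T (Pos a d) - a)" and "E (Pos a d) = d" using TE_Pos by auto
  moreover have "\<And>b. (2*int m) dvd ((T (Pos a d) - b) - (a - b))" "\<And>b. (2*int m) dvd ((T (Pos a d) + b) - (a + b))"
    using calculation(1) by simp_all
  ultimately show ?thesis unfolding gg_def by (auto simp: Pos_eq)
qed

lemma dv: "(2*int m) dvd D \<Longrightarrow> even D \<and> (D = 0 \<or> D \<ge> 2*int m \<or> D \<le> - (2*int m))"
  using dvd_small[of "2*int m" D] mpos by (auto intro: dvd_trans[of 2 "2*int m"])

lemma meven': "even (int m)" using meven by simp

lemma K1: assumes "0 \<le> t" "t < 2*int m" "0 \<le> t'" "t' < 2*int m"
  "e = snd (Gam t e)" "e' = snd (Gam t' e')"
  "(2*int m) dvd ((fst (Gam t e) - t) - (fst (Gam t' e') - t'))"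
  shows "t = t' \<and> e = e'"
  using assms(1-6) dv[OF assms(7)] meven' unfolding Gam_def by (auto split: if_splits)

lemma K2: assumes "0 \<le> t" "t < 2*int m" "0 \<le> t'" "t' < 2*int m"
  "e \<noteq> snd (Gam t e)" "e' \<noteq> snd (Gam t' e')"
  "(2*int m) dvd ((fst (Gam t e) + t) - (fst (Gam t' e') + t'))"
  shows "t = t' \<and> e = e'"
  using assms(1-6) dv[OF assms(7)] meven' unfolding Gam_def by (auto split: if_splits)

lemma GI: assumes "0 \<le> t" "t < 2*int m" "0 \<le> t'" "t' < 2*int m"
  "snd (Gam t e) = snd (Gam t' e')"
  "(2*int m) dvd (fst (Gam t e) - fst (Gam t' e'))"
  shows "t = t' \<and> e = e'"
  using assms(1-5) dv[OF assms(6)] meven' unfolding Gam_def by (auto split: if_splits)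

lemma TE_eq: "T x = T x' \<Longrightarrow> E x = E x' \<Longrightarrow> x = x'"
  using Pos_TE[of x, symmetric] Pos_TE[of x', symmetric] by simp

lemma gg_inj1: assumes h: "gg x y = gg x y'" shows "y = y'"
proof -
  define tw where "tw = fst (Gam (T x) (E x))"
  define ew where "ew = snd (Gam (T x) (E x))"
  have E: "E y = E y'" using h unfolding gg_def ew_def[symmetric] tw_def[symmetric]
    by (auto simp: Pos_eq split: if_splits)
  have "(2*int m) dvd (T y - T y')"
  proof (cases "E y = ew")
    case True
    then have "(2*int m) dvd ((T y - tw) - (T y' - tw))" using h E unfolding gg_def ew_def[symmetric] tw_def[symmetric]
      by (auto simp: Pos_eq)
    then show ?thesis by simp
  next
    case False
    then have "(2*int m) dvd ((T y + tw) - (T y' + tw))" using h E unfolding gg_def ew_def[symmetric] tw_def[symmetric]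
      by (auto simp: Pos_eq)
    then show ?thesis by simp
  qed
  then have "T y = T y'" using dv[of "T y - T y'"] T_ge[of y] T_lt[of y] T_ge[of y'] T_lt[of y'] by auto
  then show ?thesis using E TE_eq by blast
qed

lemma dvd_neg: "(N::int) dvd A \<Longrightarrow> B = - A \<Longrightarrow> N dvd B" by simp

lemma gg_inj2: assumes h: "gg x y = gg x' y" shows "x = x'"
proof -
  define tw where "tw = fst (Gam (T x) (E x))"
  define ew where "ew = snd (Gam (T x) (E x))"
  define tw' where "tw' = fst (Gam (T x') (E x'))"
  define ew' where "ew' = snd (Gam (T x') (E x'))"
  note defs = ew_def[symmetric] tw_def[symmetric] ew'_def[symmetric] tw'_def[symmetric]
  have E: "ew = ew'" using h unfolding gg_def defs
    by (auto simp: Pos_eq split: if_splits)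
  have "(2*int m) dvd (tw - tw')"
  proof (cases "E y = ew")
    case True
    then have "(2*int m) dvd ((T y - tw) - (T y - tw'))" using h E unfolding gg_def defs
      by (auto simp: Pos_eq)
    then show ?thesis by (rule dvd_neg) simp
  next
    case False
    then have "(2*int m) dvd ((T y + tw) - (T y + tw'))" using h E unfolding gg_def defs
      by (auto simp: Pos_eq)
    then show ?thesis by simp
  qed
  then have "T x = T x' \<and> E x = E x'" using GI[of "T x" "T x'" "E x" "E x'"] T_ge T_lt E
    unfolding defs by blast
  then show ?thesis using TE_eq by blast
qed

lemma rho_inj: assumes hr: "\<And>t e. h (Pos t e) = Pos (t+j) e" and h: "gg x (h x) = gg x' (h x')"
  shows "x = x'"
proof -
  define tw where "tw = fst (Gam (T x) (E x))"
  define ew where "ew = snd (Gam (T x) (E x))"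
  define tw' where "tw' = fst (Gam (T x') (E x'))"
  define ew' where "ew' = snd (Gam (T x') (E x'))"
  note defs = ew_def[symmetric] tw_def[symmetric] ew'_def[symmetric] tw'_def[symmetric]
  have hx: "h x = Pos (T x + j) (E x)" "h x' = Pos (T x' + j) (E x')"
    using hr[of "T x" "E x"] hr[of "T x'" "E x'"] by (simp_all add: Pos_TE)
  have h2: "(if E x = ew then Pos (T x + j - tw) False else Pos (T x + j + tw) True) =
     (if E x' = ew' then Pos (T x' + j - tw') False else Pos (T x' + j + tw') True)"
    using h unfolding hx gg_Pos defs .
  have fl: "(E x = ew) = (E x' = ew')" using h2 by (auto simp: Pos_eq split: if_splits)
  show ?thesis
  proof (cases "E x = ew")
    case True
    then have "(2*int m) dvd ((T x + j - tw) - (T x' + j - tw'))" using h2 fl by (auto simp: Pos_eq)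
    then have "(2*int m) dvd ((tw - T x) - (tw' - T x'))" by (rule dvd_neg) simp
    then have "T x = T x' \<and> E x = E x'" using K1[of "T x" "T x'" "E x" "E x'"] T_ge T_lt True fl
      unfolding defs by blast
    then show ?thesis using TE_eq by blast
  next
    case False
    then have "(2*int m) dvd ((T x + j + tw) - (T x' + j + tw'))" using h2 fl by (auto simp: Pos_eq)
    then have "(2*int m) dvd ((tw + T x) - (tw' + T x'))" by (simp add: algebra_simps)
    then have "T x = T x' \<and> E x = E x'" using K2[of "T x" "T x'" "E x" "E x'"] T_ge T_lt False fl
      unfolding defs by blast
    then show ?thesis using TE_eq by blast
  qed
qed

lemma sigma_inj: assumes hr: "\<And>t e. h (Pos t e) = Pos (j - t) (\<not> e)" and h: "gg x (h x) = gg x' (h x')"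
  shows "x = x'"
proof -
  define tw where "tw = fst (Gam (T x) (E x))"
  define ew where "ew = snd (Gam (T x) (E x))"
  define tw' where "tw' = fst (Gam (T x') (E x'))"
  define ew' where "ew' = snd (Gam (T x') (E x'))"
  note defs = ew_def[symmetric] tw_def[symmetric] ew'_def[symmetric] tw'_def[symmetric]
  have hx: "h x = Pos (j - T x) (\<not> E x)" "h x' = Pos (j - T x') (\<not> E x')"
    using hr[of "T x" "E x"] hr[of "T x'" "E x'"] by (simp_all add: Pos_TE)
  have h2: "(if (\<not> E x) = ew then Pos (j - T x - tw) False else Pos (j - T x + tw) True) =
     (if (\<not> E x') = ew' then Pos (j - T x' - tw') False else Pos (j - T x' + tw') True)"
    using h unfolding hx gg_Pos defs .
  have fl: "((\<not> E x) = ew) = ((\<not> E x') = ew')" using h2 by (auto simp: Pos_eq split: if_splits)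
  show ?thesis
  proof (cases "(\<not> E x) = ew")
    case True
    then have "(2*int m) dvd ((j - T x - tw) - (j - T x' - tw'))" using h2 fl by (auto simp: Pos_eq)
    then have "(2*int m) dvd ((tw + T x) - (tw' + T x'))" by (rule dvd_neg) simp
    then have "T x = T x' \<and> E x = E x'" using K2[of "T x" "T x'" "E x" "E x'"] T_ge T_lt True fl
      unfolding defs by blast
    then show ?thesis using TE_eq by blast
  next
    case False
    then have "(2*int m) dvd ((j - T x + tw) - (j - T x' + tw'))" using h2 fl by (auto simp: Pos_eq)
    then have "(2*int m) dvd ((tw - T x) - (tw' - T x'))" by (simp add: algebra_simps)
    then have "T x = T x' \<and> E x = E x'" using K1[of "T x" "T x'" "E x" "E x'"] T_ge T_lt False fl
      unfolding defs by blast
    then show ?thesis using TE_eq by blast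
  qed
qed

end



lemma cyc_nth: "distinct L \<Longrightarrow> i < length L \<Longrightarrow> cycle_of_list L (L!i) = L ! (Suc i mod length L)"
proof -
  assume d: "distinct L" and i: "i < length L"
  have "map (cycle_of_list L ^^ 1) L = rotate 1 L" using cyclic_rotation[OF d] .
  then have "map (cycle_of_list L) L ! i = rotate 1 L ! i" by simp
  then show ?thesis using i by (simp add: nth_rotate1)
qed

lemma foldr_comp_gen: "foldr (\<lambda>k h. F k \<circ> h) xs h = foldr (\<lambda>k h. F k \<circ> h) xs id \<circ> h"
  by (induction xs) (simp_all add: comp_assoc)

context dih begin

lemma L1_eq: "b_cycle1 (4*m) c = map (\<lambda>t. c (ev t)) [0..<2*m]"
  by (rule nth_equalityI) (auto simp: b_cycle1_def nth_append rev_nth ev_def)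

lemma L2_eq: "b_cycle2 (4*m) c = map (\<lambda>t. c (od t)) [0..<2*m]"
  apply (rule nth_equalityI) apply (auto simp: b_cycle2_def nth_append rev_nth od_def)
  by (simp add: mult_2)

lemma L1_dist: "distinct (map (\<lambda>t. c (ev t)) [0..<2*m])"
  unfolding distinct_map
proof (intro conjI inj_onI)
  fix x y assume "x \<in> set [0..<2*m]" "y \<in> set [0..<2*m]" "c (ev x) = c (ev y)"
  then show "x = y" using inj_onD[OF cinj, of "ev x" "ev y"] ev_lt ev_inj by auto
qed simp

lemma L2_dist: "distinct (map (\<lambda>t. c (od t)) [0..<2*m])"
  unfolding distinct_map
proof (intro conjI inj_onI)
  fix x y assume "x \<in> set [0..<2*m]" "y \<in> set [0..<2*m]" "c (od x) = c (od y)"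
  then show "x = y" using inj_onD[OF cinj, of "od x" "od y"] od_lt od_inj by auto
qed simp

lemma nat_mod_suc: "nat ((t+1) mod (2*int m)) = Suc (nat (t mod (2*int m))) mod (2*m)"
proof -
  define k where "k = nat (t mod (2*int m))"
  have hk: "t mod (2*int m) = int k" unfolding k_def using mpos by simp
  have e1: "(t+1) mod (2*int m) = (int k + 1) mod (2*int m)" using mod_add_left_eq[of t "2*int m" 1] hk by (simp add: add.commute)
  have e2: "(int k + 1) mod (2*int m) = int (Suc k mod (2*m))"
    using of_nat_mod[of "Suc k" "2*m", where 'a=int] by (simp add: add.commute)
  show ?thesis unfolding k_def[symmetric] e1 e2 by simp
qed

lemma perm_b_Pos: "perm_b (4*m) c (Pos t e) = Pos (t+1) e"
proof -
  define k where "k = nat (t mod (2*int m))"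
  have k: "k < 2*m" unfolding k_def by (rule nmod_lt)
  have k1: "nat ((t+1) mod (2*int m)) = Suc k mod (2*m)" unfolding k_def by (rule nat_mod_suc)
  have s1: "Suc k mod (2*m) < 2*m" using mpos by simp
  show ?thesis
  proof (cases e)
    case True
    have "Pos t e = map (\<lambda>t. c (od t)) [0..<2*m] ! k" using True k unfolding Pos_def k_def by simp
    moreover have "cycle_of_list (map (\<lambda>t. c (od t)) [0..<2*m]) (map (\<lambda>t. c (od t)) [0..<2*m] ! k)
       = c (od (Suc k mod (2*m)))"
      using cyc_nth[OF L2_dist, of k] k s1 by simp
    moreover have "c (od (Suc k mod (2*m))) \<notin> set (map (\<lambda>t. c (ev t)) [0..<2*m])"
      using s1 by (auto dest!: inj_onD[OF cinj] simp: ev_lt od_lt ev_od[symmetric])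
    ultimately show ?thesis unfolding perm_b_def L1_eq L2_eq using True
      by (simp add: id_outside_supp Pos_def k1)
  next
    case False
    have "Pos t e = map (\<lambda>t. c (ev t)) [0..<2*m] ! k" using False k unfolding Pos_def k_def by simp
    moreover have "cycle_of_list (map (\<lambda>t. c (ev t)) [0..<2*m]) (map (\<lambda>t. c (ev t)) [0..<2*m] ! k)
       = c (ev (Suc k mod (2*m)))"
      using cyc_nth[OF L1_dist, of k] k s1 by simp
    moreover have "map (\<lambda>t. c (ev t)) [0..<2*m] ! k \<notin> set (map (\<lambda>t. c (od t)) [0..<2*m])"
      using k by (auto dest!: inj_onD[OF cinj] simp: ev_lt od_lt ev_od)
    ultimately show ?thesis unfolding perm_b_def L1_eq L2_eq using False
      by (simp add: id_outside_supp Pos_def k1)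
  qed
qed

lemma perm_b_pow: "(perm_b (4*m) c ^^ j) (Pos t e) = Pos (t + int j) e"
proof (induction j)
  case (Suc j)
  have "t + int (Suc j) = (t + int j) + 1" by simp
  then show ?case using Suc by (simp add: perm_b_Pos add.commute add.left_commute)
qed simp

end



context dih begin

lemma fa: "2*N \<le> 4*m \<Longrightarrow> j < 4*m \<Longrightarrow>
  foldr (\<lambda>k h. cycle_of_list [c (2*k), c (2*k+1)] \<circ> h) [0..<N] id (c j) =
  (if j < 2*N then c (if even j then j+1 else j-1) else c j)"
proof (induction N arbitrary: j)
  case 0 then show ?case by simp
next
  case (Suc N)
  let ?F = "\<lambda>k h. cycle_of_list [c (2*k), c (2*k+1)] \<circ> h"
  have "foldr ?F [0..<Suc N] id = foldr ?F [0..<N] (cycle_of_list [c (2*N), c (2*N+1)] \<circ> id)"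
    by simp
  also have "\<dots> = foldr ?F [0..<N] id \<circ> cycle_of_list [c (2*N), c (2*N+1)]"
    using foldr_comp_gen[of "\<lambda>k. cycle_of_list [c (2*k), c (2*k+1)]"] by simp
  finally have eq: "foldr ?F [0..<Suc N] id (c j) = foldr ?F [0..<N] id (transpose (c (2*N)) (c (2*N+1)) (c j))"
    by simp
  have N: "2*N \<le> 4*m" "2*N+1 < 4*m" using Suc.prems by auto
  have i1: "c j = c (2*N) \<longleftrightarrow> j = 2*N" using inj_onD[OF cinj, of j "2*N"] Suc.prems N by auto
  have i2: "c j = c (2*N+1) \<longleftrightarrow> j = 2*N+1" using inj_onD[OF cinj, of j "2*N+1"] Suc.prems N by auto
  define j' where "j' = (if j = 2*N then 2*N+1 else if j = 2*N+1 then 2*N else j)"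
  have tr: "transpose (c (2*N)) (c (2*N+1)) (c j) = c j'"
    unfolding j'_def transpose_def using i1 i2 by auto
  have j': "j' < 4*m" unfolding j'_def using N Suc.prems by auto
  have ih: "foldr ?F [0..<N] id (c j') = (if j' < 2*N then c (if even j' then j'+1 else j'-1) else c j')"
    by (rule Suc.IH[OF N(1) j'])
  show ?case unfolding eq tr ih unfolding j'_def by auto
qed

lemma perm_a_c: "j < 4*m \<Longrightarrow> perm_a (4*m) c (c j) = c (if even j then j+1 else j-1)"
  unfolding perm_a_def using fa[of "2*m" j] by simp

lemma modI: "0 \<le> b \<Longrightarrow> b < (N::int) \<Longrightarrow> N dvd (a - b) \<Longrightarrow> a mod N = b"
  by (metis mod_eq_dvd_iff mod_pos_pos_trivial)

lemma perm_a_Pos: "perm_a (4*m) c (Pos t e) = Pos (int m - 1 - t) (\<not> e)"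
proof -
  define k where "k = nat (t mod (2*int m))"
  have k: "k < 2*m" unfolding k_def by (rule nmod_lt)
  have hk: "t mod (2*int m) = int k" unfolding k_def using mpos by simp
  have dk: "(2*int m) dvd (t - int k)" using hk by (metis mod_mod_trivial mod_eq_dvd_iff of_nat_mod)
  define k2 where "k2 = (if k < m then m-1-k else 3*m-1-k)"
  have "(int m - 1 - t) mod (2*int m) = int k2"
  proof (rule modI)
    show "0 \<le> int k2" by simp
    show "int k2 < 2*int m" unfolding k2_def using k mpos by auto
    have eqd: "(int m - 1 - t) - int k2 = (if k < m then 0 else - (2*int m)) - (t - int k)"
      unfolding k2_def using k mpos by auto
    have "(2*int m) dvd ((if k < m then 0 else - (2*int m)) - (t - int k))" by (rule dvd_diff[OF _ dk]) auto
    then show "(2*int m) dvd ((int m - 1 - t) - int k2)" unfolding eqd .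
  qed
  then have k2e: "nat ((int m - 1 - t) mod (2*int m)) = k2" by simp
  show ?thesis
  proof (cases e)
    case True
    have "perm_a (4*m) c (Pos t e) = c (od k - 1)" unfolding Pos_def k_def[symmetric] using True
      perm_a_c[of "od k"] od_lt[OF k] od_odd by simp
    also have "od k - 1 = ev k2" unfolding od_def ev_def k2_def using k by auto
    finally show ?thesis unfolding Pos_def k2e using True by simp
  next
    case False
    have "perm_a (4*m) c (Pos t e) = c (ev k + 1)" unfolding Pos_def k_def[symmetric] using False
      perm_a_c[of "ev k"] ev_lt[OF k] ev_even by simp
    also have "ev k + 1 = od k2" unfolding od_def ev_def k2_def using k mpos by auto
    finally show ?thesis unfolding Pos_def k2e using False by simp
  qed
qed

lemma G2_form: "h \<in> G2 (4*m) c \<Longrightarrow>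
   (\<exists>j. \<forall>t e. h (Pos t e) = Pos (t + j) e) \<or> (\<exists>j. \<forall>t e. h (Pos t e) = Pos (j - t) (\<not> e))"
proof -
  assume "h \<in> G2 (4*m) c"
  then obtain j i where h: "h = (perm_b (4*m) c ^^ j) \<circ> (perm_a (4*m) c ^^ i)" "i < 2"
    unfolding G2_def by blast
  show ?thesis
  proof (cases "i = 0")
    case True
    then show ?thesis using h perm_b_pow by (intro disjI1 exI[of _ "int j"]) auto
  next
    case False
    then have "i = 1" using h by simp
    then show ?thesis using h perm_b_pow perm_a_Pos
      by (intro disjI2 exI[of _ "int m - 1 + int j"]) (auto simp: algebra_simps)
  qed
qed

end



theorem theorem4p9:
  fixes c :: "nat \<Rightarrow> 'a::{finite,field}"
    and f :: "'a \<Rightarrow> 'a \<Rightarrow> 'a"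
    and \<beta> :: "nat \<Rightarrow> 'a \<Rightarrow> 'a"
    and r :: nat
  assumes "CARD('a) = 2 ^ r" and "r \<ge> 3"
    and "bij_betw c {..<CARD('a)} UNIV"
    and "lpp f"
    and "ppt_of CARD('a) c f \<beta>"
    and "bij_betw \<beta> {..<CARD('a)} (G2 CARD('a) c)"
  shows "\<exists>g. companion f g"
proof -
  define m :: nat where "m = 2^(r-2)"
  have "r = 2 + (r-2)" using assms(2) by simp
  then have "(2::nat)^r = 2^2 * 2^(r-2)" by (metis power_add)
  then have q4: "CARD('a) = 4*m" unfolding m_def using assms(1) by simp
  have me: "even m" unfolding m_def using assms(2) by simp
  have mp: "m > 0" unfolding m_def by simp
  interpret dih c m
    using q4 me mp assms(3) by unfold_locales auto
  have bj: "\<And>i. i < 4*m \<Longrightarrow> bij (\<beta> i)" and fpf: "\<And>i j x. i < 4*m \<Longrightarrow> j < 4*m \<Longrightarrow> i \<noteq> j \<Longrightarrow> inv (\<beta> i) (\<beta> j x) \<noteq> x"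
    and fb: "\<And>i x. i < 4*m \<Longrightarrow> f x (\<beta> i x) = c i"
    using assms(5) q4 unfolding ppt_of_def ppt_def by auto
  have inG: "\<And>i. i < 4*m \<Longrightarrow> \<beta> i \<in> G2 (4*m) c"
    using assms(6) q4 by (metis bij_betw_apply lessThan_iff)
  have trans: "\<exists>i<4*m. \<beta> i x = y" for x y
  proof -
    have inj: "inj_on (\<lambda>i. \<beta> i x) {..<4*m}"
    proof (rule inj_onI, rule ccontr)
      fix i j assume ij: "i \<in> {..<4*m}" "j \<in> {..<4*m}" "\<beta> i x = \<beta> j x" "i \<noteq> j"
      have "inv (\<beta> i) (\<beta> i x) = x" using bj[of i] ij(1) by (simp add: bij_is_inj)
      then have "inv (\<beta> i) (\<beta> j x) = x" using ij(3) by simp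
      then show False using fpf[of i j x] ij by simp
    qed
    have "card ((\<lambda>i. \<beta> i x) ` {..<4*m}) = 4*m" using card_image[OF inj] by simp
    then have "(\<lambda>i. \<beta> i x) ` {..<4*m} = UNIV" using q4
      by (metis card_subset_eq finite subset_UNIV)
    then have "y \<in> (\<lambda>i. \<beta> i x) ` {..<4*m}" by simp
    then show ?thesis by auto
  qed
  have lg: "lpp gg"
    unfolding lpp_def
  proof (intro conjI allI)
    fix y
    have "inj (\<lambda>x. gg x y)" by (rule injI) (rule gg_inj2)
    then show "bij (\<lambda>x. gg x y)" by (simp add: bij_def finite_UNIV_inj_surj)
  next
    fix x
    have "inj (\<lambda>y. gg x y)" by (rule injI) (rule gg_inj1)
    then show "bij (\<lambda>y. gg x y)" by (simp add: bij_def finite_UNIV_inj_surj)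
  qed
  define \<Phi> where "\<Phi> p = (f (fst p) (snd p), gg (fst p) (snd p))" for p
  have injP: "inj \<Phi>"
  proof (rule injI)
    fix p p' assume h: "\<Phi> p = \<Phi> p'"
    obtain x y x' y' where pp: "p = (x,y)" "p' = (x',y')" by (cases p, cases p')
    obtain i where i: "i < 4*m" "\<beta> i x = y" using trans by blast
    obtain i' where i': "i' < 4*m" "\<beta> i' x' = y'" using trans by blast
    have "f x y = f x' y'" using h pp unfolding \<Phi>_def by simp
    then have "c i = c i'" using fb[OF i(1), of x] fb[OF i'(1), of x'] i(2) i'(2) by simp
    then have ii: "i = i'" using inj_onD[OF cinj] i i' by auto
    have gh: "gg x (\<beta> i x) = gg x' (\<beta> i x')" using h pp i i' ii unfolding \<Phi>_def by simp
    have "x = x'"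
      using G2_form[OF inG[OF i(1)]]
    proof
      assume "\<exists>j. \<forall>t e. \<beta> i (Pos t e) = Pos (t + j) e"
      then obtain j where "\<And>t e. \<beta> i (Pos t e) = Pos (t + j) e" by blast
      then show "x = x'" using rho_inj gh by blast
    next
      assume "\<exists>j. \<forall>t e. \<beta> i (Pos t e) = Pos (j - t) (\<not> e)"
      then obtain j where "\<And>t e. \<beta> i (Pos t e) = Pos (j - t) (\<not> e)" by blast
      then show "x = x'" using sigma_inj gh by blast
    qed
    then show "p = p'" using pp i i' ii by simp
  qed
  then have surjP: "surj \<Phi>" by (simp add: finite_UNIV_inj_surj)
  have "orthogonal f gg"
    unfolding orthogonal_def
  proof (intro allI)
    fix u v
    obtain p where p: "\<Phi> p = (u,v)" using surjP by (metis surjD)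
    show "\<exists>!p. f (fst p) (snd p) = u \<and> gg (fst p) (snd p) = v"
    proof (rule ex1I[of _ p])
      show "f (fst p) (snd p) = u \<and> gg (fst p) (snd p) = v" using p unfolding \<Phi>_def by simp
    next
      fix p' assume "f (fst p') (snd p') = u \<and> gg (fst p') (snd p') = v"
      then have "\<Phi> p' = \<Phi> p" using p unfolding \<Phi>_def by simp
      then show "p' = p" using injP by (simp add: inj_eq)
    qed
  qed
  then show ?thesis using lg unfolding companion_def by blast
qed


end
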